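(* Let $G$ be a word-representable graph. Then for all $n\ge 3$, $l(G \,\square\, K_n) \le n\,l(G) + (n^2-1)|G|$.
   Context: All graphs are simple and undirected; $|G|$ denotes the number of vertices of $G$ and $K_n$ is the complete graph on $n$ vertices. Letters $x,y$ alternate in a word $w$ if deleting all other letters from $w$ yields $xyxy\ldots$ or $yxyx\ldots$ (of either parity). A word $w$ over $V(G)$ represents $G$ if every vertex occurs in $w$ and for all distinct $x,y$, $xy\in E(G)$ iff $x,y$ alternate in $w$; $G$ is word-representable if such a word exists, and $l(G)$ is the minimum length of a word representing $G$. The Cartesian product $G\,\square\,H$ has vertex set $V(G)\times V(H)$, with $(u,v)$ adjacent to $(u',v')$ iff either $u=u'$ and $vv'\in E(H)$, or $v=v'$ and $uu'\in E(G)$. *)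

theory Defs
  imports Main
begin

definition simple_graph :: "'a set \<Rightarrow> ('a \<Rightarrow> 'a \<Rightarrow> bool) \<Rightarrow> bool" where
  "simple_graph V E \<longleftrightarrow> finite V \<and> (\<forall>x y. E x y \<longrightarrow> x \<in> V \<and> y \<in> V)
     \<and> (\<forall>x y. E x y \<longrightarrow> E y x) \<and> (\<forall>x. \<not> E x x)"

definition alternate :: "'a list \<Rightarrow> 'a \<Rightarrow> 'a \<Rightarrow> bool" where
  "alternate w x y \<longleftrightarrow>
     (let u = filter (\<lambda>z. z = x \<or> z = y) w in
      \<forall>i. Suc i < length u \<longrightarrow> u ! i \<noteq> u ! Suc i)"

definition represents :: "'a set \<Rightarrow> ('a \<Rightarrow> 'a \<Rightarrow> bool) \<Rightarrow> 'a list \<Rightarrow> bool" where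
  "represents V E w \<longleftrightarrow> set w = V \<and>
     (\<forall>x\<in>V. \<forall>y\<in>V. x \<noteq> y \<longrightarrow> (E x y \<longleftrightarrow> alternate w x y))"

definition word_representable :: "'a set \<Rightarrow> ('a \<Rightarrow> 'a \<Rightarrow> bool) \<Rightarrow> bool" where
  "word_representable V E \<longleftrightarrow> (\<exists>w. represents V E w)"

definition min_rep_length :: "'a set \<Rightarrow> ('a \<Rightarrow> 'a \<Rightarrow> bool) \<Rightarrow> nat" where
  "min_rep_length V E = (LEAST k. \<exists>w. represents V E w \<and> length w = k)"

definition K_V :: "nat \<Rightarrow> nat set" where
  "K_V n = {..<n}"

definition K_E :: "nat \<Rightarrow> nat \<Rightarrow> nat \<Rightarrow> bool" where
  "K_E n i j \<longleftrightarrow> i < n \<and> j < n \<and> i \<noteq> j"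

definition cprod_V :: "'a set \<Rightarrow> 'b set \<Rightarrow> ('a \<times> 'b) set" where
  "cprod_V V1 V2 = V1 \<times> V2"

definition cprod_E :: "'a set \<Rightarrow> ('a \<Rightarrow> 'a \<Rightarrow> bool) \<Rightarrow> 'b set \<Rightarrow> ('b \<Rightarrow> 'b \<Rightarrow> bool)
    \<Rightarrow> 'a \<times> 'b \<Rightarrow> 'a \<times> 'b \<Rightarrow> bool" where
  "cprod_E V1 E1 V2 E2 p q \<longleftrightarrow>
     (fst p = fst q \<and> fst p \<in> V1 \<and> E2 (snd p) (snd q)) \<or>
     (snd p = snd q \<and> snd p \<in> V2 \<and> E1 (fst p) (fst q))"

end

theory Submission
  imports Defs
begin


fun alt :: "'a list \<Rightarrow> bool" where
  "alt (x # y # zs) = (x \<noteq> y \<and> alt (y # zs))"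
| "alt _ = True"

lemma alt_iff: "alt u \<longleftrightarrow> (\<forall>i. Suc i < length u \<longrightarrow> u ! i \<noteq> u ! Suc i)"
proof (induction u rule: alt.induct)
  case (1 x y zs)
  have "(\<forall>i. Suc i < length (x # y # zs) \<longrightarrow> (x # y # zs) ! i \<noteq> (x # y # zs) ! Suc i)
     \<longleftrightarrow> x \<noteq> y \<and> (\<forall>i. Suc i < length (y # zs) \<longrightarrow> (y # zs) ! i \<noteq> (y # zs) ! Suc i)"
    (is "?L \<longleftrightarrow> ?R")
  proof
    assume ?L then show ?R by (metis length_Cons nth_Cons_0 nth_Cons_Suc Suc_less_eq zero_less_Suc)
  next
    assume ?R then show ?L
      by (metis One_nat_def length_Cons less_Suc_eq_0_disj nth_Cons_0 nth_Cons_Suc Suc_less_eq)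
  qed
  then show ?case using 1 by simp
qed auto

lemma alternate_alt: "alternate w x y = alt (filter (\<lambda>z. z = x \<or> z = y) w)"
  unfolding alternate_def Let_def alt_iff ..

lemma alternate_sym: "alternate w x y = alternate w y x"
  unfolding alternate_alt by (simp add: disj_commute)

lemma alt_Cons: "alt (x # ys) \<longleftrightarrow> alt ys \<and> (ys \<noteq> [] \<longrightarrow> x \<noteq> hd ys)"
  by (cases ys) auto

lemma alt_append: "alt (xs @ ys) \<longleftrightarrow> alt xs \<and> alt ys \<and> (xs \<noteq> [] \<longrightarrow> ys \<noteq> [] \<longrightarrow> last xs \<noteq> hd ys)"
proof (induction xs)
  case Nil then show ?case by simp
next
  case (Cons x xs)
  show ?case
  proof (cases xs)
    case Nil then show ?thesis by (simp add: alt_Cons)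
  next
    case (Cons y zs)
    then show ?thesis using Cons.IH by (auto simp: alt_Cons)
  qed
qed

lemma alt_map: "inj_on f (set xs) \<Longrightarrow> alt (map f xs) \<longleftrightarrow> alt xs"
  by (induction xs rule: alt.induct) (auto simp: inj_on_eq_iff)

lemma filter_single: "distinct xs \<Longrightarrow> x \<in> set xs \<Longrightarrow> filter (\<lambda>z. z = x) xs = [x]"
proof (induction xs)
  case (Cons y ys)
  then show ?case
  proof (cases "y = x")
    case True
    with Cons have "x \<notin> set ys" by simp
    then have "filter (\<lambda>z. z = x) ys = []" by (auto simp: filter_empty_conv)
    then show ?thesis using True by simp
  qed simp
qed simp

lemma alt_filter_crit:
  assumes "\<forall>p q. p < q \<and> q < length xs \<and> xs!p = xs!q \<and> (xs!p = x \<or> xs!p = y) \<longrightarrow>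
     (\<exists>r. p < r \<and> r < q \<and> (xs!r = x \<or> xs!r = y) \<and> xs!r \<noteq> xs!p)"
  shows "alt (filter (\<lambda>z. z = x \<or> z = y) xs)"
  using assms
proof (induction xs)
  case Nil then show ?case by simp
next
  case (Cons z zs)
  have crit: "\<forall>p q. p < q \<and> q < length zs \<and> zs!p = zs!q \<and> (zs!p = x \<or> zs!p = y) \<longrightarrow>
     (\<exists>r. p < r \<and> r < q \<and> (zs!r = x \<or> zs!r = y) \<and> zs!r \<noteq> zs!p)"
  proof (intro allI impI)
    fix p q assume h: "p < q \<and> q < length zs \<and> zs!p = zs!q \<and> (zs!p = x \<or> zs!p = y)"
    have h2: "Suc p < Suc q \<and> Suc q < length (z#zs) \<and> (z#zs)!Suc p = (z#zs)!Suc q \<and> ((z#zs)!Suc p = x \<or> (z#zs)!Suc p = y)"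
      using h by auto
    obtain r where "Suc p < r \<and> r < Suc q \<and> ((z#zs)!r = x \<or> (z#zs)!r = y) \<and> (z#zs)!r \<noteq> (z#zs)!Suc p"
      using Cons.prems[rule_format, OF h2] by blast
    then show "\<exists>r. p < r \<and> r < q \<and> (zs!r = x \<or> zs!r = y) \<and> zs!r \<noteq> zs!p"
      by (intro exI[of _ "r - 1"]) (cases r; auto)
  qed
  have IH: "alt (filter (\<lambda>z. z = x \<or> z = y) zs)" using Cons.IH crit by blast
  show ?case
  proof (cases "z = x \<or> z = y")
    case False then show ?thesis using IH by simp
  next
    case True
    have "z \<noteq> hd (filter (\<lambda>z. z = x \<or> z = y) zs)" if ne: "filter (\<lambda>z. z = x \<or> z = y) zs \<noteq> []"
    proof
      assume eq: "z = hd (filter (\<lambda>z. z = x \<or> z = y) zs)"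
      obtain z' F where F: "filter (\<lambda>z. z = x \<or> z = y) zs = z' # F" using ne by (cases "filter (\<lambda>z. z = x \<or> z = y) zs") auto
      then obtain us vs where us: "zs = us @ z' # vs" "\<forall>u\<in>set us. \<not> (u = x \<or> u = y)" "z' = x \<or> z' = y"
        unfolding filter_eq_Cons_iff by blast
      have zz: "z' = z" using eq F by simp
      have "(z#zs) ! 0 = (z#zs) ! Suc (length us)" using us zz by (simp add: nth_append)
      moreover have "Suc (length us) < length (z#zs)" using us by simp
      ultimately obtain r where r: "0 < r" "r < Suc (length us)" "(z#zs)!r = x \<or> (z#zs)!r = y"
        using Cons.prems[rule_format, of 0 "Suc (length us)"] True by auto
      then have "us ! (r - 1) = x \<or> us ! (r-1) = y" using us by (cases r) (auto simp: nth_append)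
      moreover have "r - 1 < length us" using r by simp
      ultimately show False using us(2) nth_mem by blast
    qed
    then show ?thesis using True IH by (simp add: alt_Cons)
  qed
qed



lemma mod_between:
  fixes n a p q e c :: nat
  assumes "p < q" "(a+p) mod n = e" "(a+q) mod n = e" "c < n" "e < n" "c \<noteq> e"
  shows "\<exists>r. p < r \<and> r < q \<and> (a + r) mod n = c"
proof -
  define d where "d = (if e < c then c - e else c + n - e)"
  have d0: "0 < d" and dn: "d < n" using assms by (auto simp: d_def)
  have "(a + p + d) mod n = ((a+p) mod n + d) mod n" by (simp add: mod_add_left_eq)
  also have "\<dots> = (e + d) mod n" using assms by simp
  also have "\<dots> = c" using assms by (auto simp: d_def)
  finally have c: "(a + (p + d)) mod n = c" by (simp add: add.assoc)
  have "n dvd (a+q) - (a+p)" using assms mod_eq_dvd_iff_nat[of "a+p" "a+q" n] by simp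
  then have "n dvd q - p" by simp
  then have "n \<le> q - p" using assms by (simp add: dvd_imp_le)
  then show ?thesis using c d0 dn by (intro exI[of _ "p+d"]) auto
qed

lemma alt_mod:
  assumes "i \<noteq> j" "i < n" "j < n"
  shows "alt (filter (\<lambda>z. z = i \<or> z = j) (map (\<lambda>t. t mod n) [a..<b]))"
proof (rule alt_filter_crit, intro allI impI)
  fix p q
  let ?xs = "map (\<lambda>t. t mod n) [a..<b]"
  assume h: "p < q \<and> q < length ?xs \<and> ?xs!p = ?xs!q \<and> (?xs!p = i \<or> ?xs!p = j)"
  then have hp: "?xs!p = (a+p) mod n" and hq: "?xs!q = (a+q) mod n" by auto
  show "\<exists>r. p < r \<and> r < q \<and> (?xs!r = i \<or> ?xs!r = j) \<and> ?xs!r \<noteq> ?xs!p"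
  proof (cases "?xs!p = i")
    case True
    then obtain r where r: "p < r" "r < q" "(a + r) mod n = j"
      using mod_between[of p q a n i j] h hp hq assms by auto
    then show ?thesis using h True assms by (intro exI[of _ r]) auto
  next
    case False
    then have "?xs!p = j" using h by blast
    then obtain r where r: "p < r" "r < q" "(a + r) mod n = i"
      using mod_between[of p q a n j i] h hp hq assms by auto
    then show ?thesis using h \<open>?xs!p = j\<close> assms by (intro exI[of _ r]) auto
  qed
qed

lemma map_mod_shift:
  assumes "x mod n = y mod n"
  shows "map (\<lambda>t. t mod n) [x..<x+m] = map (\<lambda>t. t mod n) [y..<y+m]"
proof (rule nth_equalityI)
  fix i assume "i < length (map (\<lambda>t. t mod n) [x..<x+m])"
  then have "i < m" by simp
  have "(x + i) mod n = (x mod n + i) mod n" by (simp add: mod_add_left_eq)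
  also have "\<dots> = (y + i) mod n" using assms by (simp add: mod_add_left_eq)
  finally show "map (\<lambda>t. t mod n) [x..<x+m] ! i = map (\<lambda>t. t mod n) [y..<y+m] ! i"
    using \<open>i < m\<close> by simp
qed simp

lemma distinct_mod_range: "distinct (map (\<lambda>t. t mod n) [s..<s+n])"
proof -
  have "inj_on (\<lambda>t. t mod n) {s..<s+n}"
  proof (rule inj_onI)
    fix x y assume x: "x \<in> {s..<s+n}" and y: "y \<in> {s..<s+n}" and e: "x mod n = y mod n"
    show "x = y"
    proof (rule ccontr)
      assume "x \<noteq> y"
      then consider "x < y" | "y < x" by linarith
      then show False
      proof cases
        case 1
        then have "n dvd y - x" using e mod_eq_dvd_iff_nat[of x y n] by simp
        then have "n \<le> y - x" using 1 by (simp add: dvd_imp_le)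
        then show False using x y by auto
      next
        case 2
        then have "n dvd x - y" using e mod_eq_dvd_iff_nat[of y x n] by simp
        then have "n \<le> x - y" using 2 by (simp add: dvd_imp_le)
        then show False using x y by auto
      qed
    qed
  qed
  then show ?thesis by (simp add: distinct_map)
qed

lemma mem_mod_range:
  assumes "i < n"
  shows "i \<in> set (map (\<lambda>t. t mod n) [s..<s+n])"
proof -
  define q where "q = s div n"
  define r where "r = s mod n"
  have s: "s = q * n + r" by (simp add: q_def r_def)
  have rn: "r < n" using assms by (simp add: r_def)
  define t where "t = (if r \<le> i then i + q * n else i + (q+1)*n)"
  have "t mod n = i"
  proof (cases "r \<le> i")
    case True then show ?thesis using assms by (simp add: t_def)
  next
    case False
    have "t = i + (q+1)*n" using False by (simp add: t_def)
    moreover have "(i + (q+1)*n) mod n = i" by (rule trans[OF mod_mult_self1 mod_less[OF assms]])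
    ultimately show ?thesis by simp
  qed
  moreover have "s \<le> t \<and> t < s + n" using s rn assms by (auto simp: t_def)
  ultimately show ?thesis by force
qed

lemma one_hit: "i < n \<Longrightarrow> filter (\<lambda>t. t = i) (map (\<lambda>t. t mod n) [s..<s+n]) = [i]"
  by (rule filter_single[OF distinct_mod_range mem_mod_range])

lemma concat_ranges:
  "concat (map (\<lambda>k. map f [s + k*d ..< s + (k+1)*d]) [0..<m]) = map f [s ..< s + m*d]"
proof (induction m)
  case 0 then show ?case by simp
next
  case (Suc m)
  have "[s ..< s + Suc m * d] = [s ..< s + m*d] @ [s + m*d ..< s + (m+1)*d]"
    using upt_add_eq_append[of s "s + m*d" d] by (simp add: algebra_simps)
  then show ?case using Suc by simp
qed



fun dedup :: "'a list \<Rightarrow> 'a list" where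
  "dedup [] = []"
| "dedup (x # xs) = x # removeAll x (dedup xs)"

lemma set_dedup [simp]: "set (dedup xs) = set xs"
  by (induction xs) auto

lemma distinct_dedup: "distinct (dedup xs)"
  by (induction xs) (auto simp: distinct_removeAll)

lemma filter_dedup: "filter P (dedup xs) = dedup (filter P xs)"
proof (induction xs)
  case Nil then show ?case by simp
next
  case (Cons x xs)
  have r: "filter P (removeAll x L) = removeAll x (filter P L)" for L
    by (simp add: removeAll_filter_not_eq conj_commute)
  show ?case
  proof (cases "P x")
    case True then show ?thesis using Cons r by simp
  next
    case False
    have "x \<notin> set (filter P (dedup xs))" using False by simp
    then show ?thesis using Cons r False by simp
  qed
qed

definition blk :: "nat \<Rightarrow> 'a \<Rightarrow> ('a \<times> nat) list" where
  "blk n x = map (Pair x) [0..<n]"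
definition sig :: "nat \<Rightarrow> 'a list \<Rightarrow> ('a \<times> nat) list" where
  "sig n w = concat (map (blk n) w)"
definition rnd :: "nat \<Rightarrow> nat \<Rightarrow> 'a \<Rightarrow> ('a \<times> nat) list" where
  "rnd n k x = map (Pair x) (map (\<lambda>t. t mod n) [1 + k*(n+1) ..< 1 + k*(n+1) + n])"
definition seg :: "nat \<Rightarrow> 'a list \<Rightarrow> nat \<Rightarrow> ('a \<times> nat) list" where
  "seg n ord k = concat (map (rnd n k) ord) @ map (\<lambda>x. (x, (1 + k*(n+1) + n) mod n)) ord"
definition pre :: "nat \<Rightarrow> 'a list \<Rightarrow> ('a \<times> nat) list" where
  "pre n ord = concat (map (seg n ord) [0..<n-1])"
definition Wd :: "nat \<Rightarrow> 'a list \<Rightarrow> ('a \<times> nat) list" where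
  "Wd n w = pre n (dedup w) @ sig n w"

lemma concat_single:
  "distinct xs \<Longrightarrow> v \<in> set xs \<Longrightarrow> concat (map (\<lambda>x. if x = v then L else []) xs) = L"
proof (induction xs)
  case (Cons y ys)
  show ?case
  proof (cases "y = v")
    case True
    then have "v \<notin> set ys" using Cons by simp
    then have "concat (map (\<lambda>x. if x = v then L else []) ys) = []" by (induction ys) auto
    then show ?thesis using True by simp
  next
    case False then show ?thesis using Cons by simp
  qed
qed simp

lemma filter_fst_map_Pair: "filter (\<lambda>z. fst z = v) (map (Pair x) ys) = (if x = v then map (Pair x) ys else [])"
  by (induction ys) auto

lemma fib_seg:
  assumes "distinct ord" "v \<in> set ord"
  shows "filter (\<lambda>z. fst z = v) (seg n ord k) =
    map (Pair v) (map (\<lambda>t. t mod n) [1 + k*(n+1) ..< 1 + (k+1)*(n+1)])"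
proof -
  let ?s = "1 + k*(n+1)"
  have r: "filter (\<lambda>z. fst z = v) (rnd n k x) = (if x = v then rnd n k v else [])" for x
    by (simp add: rnd_def filter_fst_map_Pair del: map_map)
  have A: "filter (\<lambda>z. fst z = v) (concat (map (rnd n k) ord)) = rnd n k v"
    unfolding filter_concat map_map o_def r using concat_single[OF assms] by blast
  have "filter (\<lambda>z. fst z = v) (map (\<lambda>x. (x, (?s + n) mod n)) ord)
      = map (\<lambda>x. (x, (?s + n) mod n)) (filter (\<lambda>x. x = v) ord)"
    by (simp add: filter_map o_def)
  also have "\<dots> = [(v, (?s + n) mod n)]" using filter_single[OF assms] by simp
  finally have B: "filter (\<lambda>z. fst z = v) (map (\<lambda>x. (x, (?s + n) mod n)) ord) = [(v, (?s + n) mod n)]" .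
  have e: "1 + (k+1)*(n+1) = Suc (?s + n)" by simp
  show ?thesis unfolding seg_def filter_append A B e rnd_def by simp
qed

lemma fib_pre:
  assumes "distinct ord" "v \<in> set ord"
  shows "filter (\<lambda>z. fst z = v) (pre n ord) =
    map (Pair v) (map (\<lambda>t. t mod n) [1 ..< 1 + (n-1)*(n+1)])"
proof -
  have "filter (\<lambda>z. fst z = v) (pre n ord) =
     concat (map (\<lambda>k. map (Pair v) (map (\<lambda>t. t mod n) [1 + k*(n+1) ..< 1 + (k+1)*(n+1)])) [0..<n-1])"
    unfolding pre_def filter_concat map_map o_def fib_seg[OF assms] ..
  also have "\<dots> = map (Pair v) (concat (map (\<lambda>k. map (\<lambda>t. t mod n) [1 + k*(n+1) ..< 1 + (k+1)*(n+1)]) [0..<n-1]))"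
    by (simp add: map_concat map_map o_def)
  also have "\<dots> = map (Pair v) (map (\<lambda>t. t mod n) [1 ..< 1 + (n-1)*(n+1)])"
    using concat_ranges[of "\<lambda>t. t mod n" 1 "n+1" "n-1"] by simp
  finally show ?thesis .
qed

lemma sig_Cons [simp]: "sig n (x # w) = blk n x @ sig n w"
  by (simp add: sig_def)

lemma fib_sig:
  "filter (\<lambda>z. fst z = v) (sig n w) = map (Pair v) (map (\<lambda>t. t mod n) [0 ..< n * count_list w v])"
proof (induction w)
  case Nil then show ?case by (simp add: sig_def)
next
  case (Cons x w)
  have s: "sig n (x # w) = blk n x @ sig n w" by (simp add: sig_def)
  show ?case
  proof (cases "x = v")
    case False then show ?thesis using Cons by (simp add: s blk_def filter_fst_map_Pair)
  next
    case True
    let ?c = "count_list w v"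
    have m: "map (\<lambda>t. t mod n) [0..<n] = [0..<n]" by (rule map_idI) simp
    have sh: "map (\<lambda>t. t mod n) [0..<0 + n * ?c] = map (\<lambda>t. t mod n) [n..<n + n * ?c]"
      by (rule map_mod_shift) simp
    have u: "[0..<n + n * ?c] = [0..<n] @ [n..<n + n * ?c]"
      using upt_add_eq_append[of 0 n "n * ?c"] by simp
    have "filter (\<lambda>z. fst z = v) (sig n (x # w)) = map (Pair v) [0..<n] @ map (Pair v) (map (\<lambda>t. t mod n) [0 ..< n * ?c])"
      using Cons True by (simp add: blk_def filter_fst_map_Pair)
    also have "\<dots> = map (Pair v) (map (\<lambda>t. t mod n) [0..<n + n * ?c])"
      using sh m u by simp
    finally show ?thesis using True by simp
  qed
qed

lemma fib_W:
  assumes "0 < n" "v \<in> set w"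
  shows "filter (\<lambda>z. fst z = v) (Wd n w) =
     map (Pair v) (map (\<lambda>t. t mod n) [1 ..< 1 + (n-1)*(n+1) + n * count_list w v])"
proof -
  let ?M = "1 + (n-1)*(n+1)"
  let ?c = "count_list w v"
  have vd: "v \<in> set (dedup w)" using assms by simp
  have M: "?M = n * n" using assms by (cases n) (auto simp: algebra_simps)
  have sh: "map (\<lambda>t. t mod n) [0..<0 + n * ?c] = map (\<lambda>t. t mod n) [?M..<?M + n * ?c]"
  proof (rule map_mod_shift)
    have "n * n mod n = 0" by simp
    then show "0 mod n = ?M mod n" unfolding M by simp
  qed
  have u: "[1..<?M + n * ?c] = [1..<?M] @ [?M..<?M + n * ?c]"
    using upt_add_eq_append[of 1 ?M "n * ?c"] by simp
  have "filter (\<lambda>z. fst z = v) (Wd n w) = map (Pair v) (map (\<lambda>t. t mod n) [1..<?M]) @ map (Pair v) (map (\<lambda>t. t mod n) [0..<0 + n * ?c])"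
    unfolding Wd_def filter_append fib_pre[OF distinct_dedup vd] fib_sig[of v n w] by simp
  also have "\<dots> = map (Pair v) (map (\<lambda>t. t mod n) [1..<?M] @ map (\<lambda>t. t mod n) [?M..<?M + n * ?c])"
    unfolding sh by simp
  also have "\<dots> = map (Pair v) (map (\<lambda>t. t mod n) [1..<?M + n * ?c])"
    unfolding u by simp
  finally show ?thesis .
qed

lemma fib_alt:
  assumes "0 < n" "v \<in> set w" "i \<noteq> j" "i < n" "j < n"
  shows "alternate (Wd n w) (v,i) (v,j)"
proof -
  let ?ys = "map (\<lambda>t. t mod n) [1 ..< 1 + (n-1)*(n+1) + n * count_list w v]"
  have "filter (\<lambda>z. z = (v,i) \<or> z = (v,j)) (Wd n w)
      = filter (\<lambda>z. z = (v,i) \<or> z = (v,j)) (filter (\<lambda>z. fst z = v) (Wd n w))"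
    by (auto intro: filter_cong)
  also have "\<dots> = map (Pair v) (filter (\<lambda>t. t = i \<or> t = j) ?ys)"
    unfolding fib_W[OF assms(1,2)] by (simp add: filter_map o_def)
  finally have e: "filter (\<lambda>z. z = (v,i) \<or> z = (v,j)) (Wd n w) = map (Pair v) (filter (\<lambda>t. t = i \<or> t = j) ?ys)" .
  have inj: "inj_on (Pair v) A" for A :: "nat set" by (auto intro: inj_onI)
  show ?thesis unfolding alternate_alt e alt_map[OF inj] by (rule alt_mod[OF assms(3-5)])
qed



lemma alt_appendD: "alt (X @ Y) \<Longrightarrow> alt X \<and> alt Y"
  by (simp add: alt_append)

lemma concat_pick:
  assumes "\<forall>x. filter Q (g x) = (if x = u then [a] else if x = v then [b] else [])"
  shows "filter Q (concat (map g xs)) = map (\<lambda>x. if x = u then a else b) (filter (\<lambda>x. x = u \<or> x = v) xs)"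
  using assms by (induction xs) auto

lemma pair_filter_map:
  assumes "u \<noteq> v" "x = u \<Longrightarrow> filter (\<lambda>t. t = i) ys = [i]" "x = v \<Longrightarrow> filter (\<lambda>t. t = j) ys = [j]"
  shows "filter (\<lambda>z. z = (u,i) \<or> z = (v,j)) (map (Pair x) ys) = (if x = u then [(u,i)] else if x = v then [(v,j)] else [])"
proof -
  have e: "filter (\<lambda>z. z = (u,i) \<or> z = (v,j)) (map (Pair x) ys) = map (Pair x) (filter (\<lambda>t. (x = u \<and> t = i) \<or> (x = v \<and> t = j)) ys)"
    by (simp add: filter_map o_def)
  show ?thesis
  proof (cases "x = u")
    case True
    then have "filter (\<lambda>t. (x = u \<and> t = i) \<or> (x = v \<and> t = j)) ys = filter (\<lambda>t. t = i) ys" using assms(1) by simp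
    then show ?thesis using e True assms(2) by simp
  next
    case False
    show ?thesis
    proof (cases "x = v")
      case True
      then have "filter (\<lambda>t. (x = u \<and> t = i) \<or> (x = v \<and> t = j)) ys = filter (\<lambda>t. t = j) ys" using assms(1) by simp
      then show ?thesis using e True assms(3) False by simp
    next
      case False2: False
      then show ?thesis using e False by simp
    qed
  qed
qed

lemma rnd_filt:
  assumes "u \<noteq> v" "i < n" "j < n"
  shows "filter (\<lambda>z. z = (u,i) \<or> z = (v,j)) (rnd n k x) = (if x = u then [(u,i)] else if x = v then [(v,j)] else [])"
  unfolding rnd_def
  by (rule pair_filter_map[OF assms(1) one_hit[OF assms(2)] one_hit[OF assms(3)]])

lemma blk_filt:
  assumes "u \<noteq> v" "i < n" "j < n"
  shows "filter (\<lambda>z. z = (u,i) \<or> z = (v,j)) (blk n x) = (if x = u then [(u,i)] else if x = v then [(v,j)] else [])"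
  unfolding blk_def
  by (rule pair_filter_map[OF assms(1)]) (use assms filter_single[of "[0..<n]"] in auto)

lemma seg_filt:
  assumes "u \<noteq> v" "i < n" "j < n" "filter (\<lambda>x. x = u \<or> x = v) ord = [u,v]" "k + 1 < n"
  shows "filter (\<lambda>z. z = (u,i) \<or> z = (v,j)) (seg n ord k) =
     [(u,i),(v,j)] @ (if k + 1 = i then [(u,i)] else []) @ (if k + 1 = j then [(v,j)] else [])"
proof -
  let ?c = "(1 + k*(n+1) + n) mod n"
  have c: "?c = k + 1"
  proof -
    have "?c = ((k+1) + (k+1)*n) mod n"
      by (rule arg_cong[where f="\<lambda>x. x mod n"]) (simp add: algebra_simps)
    also have "\<dots> = k + 1" using assms(5) by (simp only: mod_mult_self1) simp
    finally show ?thesis .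
  qed
  have A: "filter (\<lambda>z. z = (u,i) \<or> z = (v,j)) (concat (map (rnd n k) ord)) = [(u,i),(v,j)]"
    using concat_pick[of "\<lambda>z. z = (u,i) \<or> z = (v,j)" "rnd n k" u "(u,i)" v "(v,j)" ord]
      rnd_filt[OF assms(1-3)] assms(1,4) by simp
  have "filter (\<lambda>z. z = (u,i) \<or> z = (v,j)) (map (\<lambda>x. (x, ?c)) ord)
     = map (\<lambda>x. (x, ?c)) (filter (\<lambda>x. (x = u \<and> ?c = i) \<or> (x = v \<and> ?c = j)) ord)"
    by (simp add: filter_map o_def)
  also have "filter (\<lambda>x. (x = u \<and> ?c = i) \<or> (x = v \<and> ?c = j)) ord
      = filter (\<lambda>x. (x = u \<and> ?c = i) \<or> (x = v \<and> ?c = j)) (filter (\<lambda>x. x = u \<or> x = v) ord)"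
    by (auto intro: filter_cong)
  finally have B: "filter (\<lambda>z. z = (u,i) \<or> z = (v,j)) (map (\<lambda>x. (x, ?c)) ord)
     = (if k + 1 = i then [(u,i)] else []) @ (if k + 1 = j then [(v,j)] else [])"
    using assms(1,4) c by auto
  show ?thesis unfolding seg_def filter_append A B ..
qed

lemma pre_filt:
  assumes "u \<noteq> v" "i < n" "j < n" "filter (\<lambda>x. x = u \<or> x = v) ord = [u,v]"
  shows "filter (\<lambda>z. z = (u,i) \<or> z = (v,j)) (pre n ord) =
     concat (map (\<lambda>k. [(u,i),(v,j)] @ (if k + 1 = i then [(u,i)] else []) @ (if k + 1 = j then [(v,j)] else [])) [0..<n-1])"
  unfolding pre_def filter_concat map_map o_def
  by (rule arg_cong[where f = concat], rule map_cong[OF refl], rule seg_filt[OF assms]) auto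

lemma sig_filt:
  assumes "u \<noteq> v" "i < n" "j < n"
  shows "filter (\<lambda>z. z = (u,i) \<or> z = (v,j)) (sig n w) =
    map (\<lambda>x. if x = u then (u,i) else (v,j)) (filter (\<lambda>x. x = u \<or> x = v) w)"
  unfolding sig_def by (rule concat_pick) (use blk_filt[OF assms] in blast)

lemma alt_blocks:
  assumes "\<forall>k\<in>set ks. F k = [a,b] \<or> F k = [a,b,a,b]" "a \<noteq> b" "alt Y" "Y \<noteq> [] \<longrightarrow> hd Y = a"
  shows "alt (concat (map F ks) @ Y) \<and> (concat (map F ks) @ Y \<noteq> [] \<longrightarrow> hd (concat (map F ks) @ Y) = a)"
  using assms(1)
proof (induction ks)
  case Nil then show ?case using assms by simp
next
  case (Cons k ks)
  then have IH: "alt (concat (map F ks) @ Y)" "concat (map F ks) @ Y \<noteq> [] \<longrightarrow> hd (concat (map F ks) @ Y) = a"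
    by auto
  from Cons.prems have "F k = [a,b] \<or> F k = [a,b,a,b]" by simp
  then show ?case using IH assms(2) by (auto simp: alt_Cons)
qed

lemma hd_concat_blocks:
  assumes "\<forall>k. F k \<noteq> [] \<and> hd (F k) = a" "ks \<noteq> []"
  shows "concat (map F ks) \<noteq> [] \<and> hd (concat (map F ks)) = a"
  using assms by (cases ks) auto

lemma dedup_hd: "dedup ys = [u,v] \<Longrightarrow> ys \<noteq> [] \<and> hd ys = u"
  by (cases ys) auto

lemma cross:
  assumes rep: "represents V E w" and uv: "u \<in> V" "v \<in> V" "u \<noteq> v" and ij: "i < n" "j < n"
    and ordf: "filter (\<lambda>x. x = u \<or> x = v) (dedup w) = [u,v]"
  shows "alternate (Wd n w) (u,i) (v,j) \<longleftrightarrow> E u v \<and> i = j"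
proof -
  let ?a = "(u,i)" and ?b = "(v,j)"
  let ?Fw = "filter (\<lambda>x. x = u \<or> x = v) w"
  let ?h = "\<lambda>x. if x = u then ?a else ?b"
  define F where "F k = [?a,?b] @ (if k + 1 = i then [?a] else []) @ (if k + 1 = j then [?b] else [])" for k
  have setw: "set w = V" using rep by (simp add: represents_def)
  have Euv: "E u v \<longleftrightarrow> alt ?Fw" using rep uv by (simp add: represents_def alternate_alt)
  have hdFw: "?Fw \<noteq> [] \<and> hd ?Fw = u" using ordf dedup_hd by (simp add: filter_dedup)
  have ab: "?a \<noteq> ?b" using uv by simp
  define FS where "FS = filter (\<lambda>z. z = ?a \<or> z = ?b) (sig n w)"
  have FS: "FS = map ?h ?Fw" unfolding FS_def by (rule sig_filt[OF uv(3) ij])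
  have injh: "inj_on ?h (set ?Fw)" using uv by (auto intro!: inj_onI)
  have altFS: "alt FS \<longleftrightarrow> E u v" unfolding FS alt_map[OF injh] Euv ..
  have FSne: "FS \<noteq> [] \<and> hd FS = ?a" using hdFw unfolding FS by (cases ?Fw) auto
  define FP where "FP = concat (map F [0..<n-1])"
  have FP: "filter (\<lambda>z. z = ?a \<or> z = ?b) (pre n (dedup w)) = FP"
    unfolding FP_def F_def by (rule pre_filt[OF uv(3) ij ordf])
  have W: "alternate (Wd n w) ?a ?b \<longleftrightarrow> alt (FP @ FS)"
    unfolding alternate_alt Wd_def filter_append FP FS_def ..
  have Fhd: "\<forall>k. F k \<noteq> [] \<and> hd (F k) = ?a" by (simp add: F_def)
  have split: "FP = concat (map F [0..<k]) @ F k @ concat (map F [Suc k..<n-1])" if "k < n - 1" for k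
  proof -
    have "[0..<n-1] = [0..<k] @ [k..<n-1]" using that upt_add_eq_append[of 0 k "n-1-k"] by simp
    also have "[k..<n-1] = k # [Suc k..<n-1]" using that upt_rec by simp
    finally show ?thesis unfolding FP_def by simp
  qed
  show ?thesis
  proof (cases "E u v")
    case False
    then have "\<not> alt (FP @ FS)" using altFS by (simp add: alt_append)
    then show ?thesis using W False by simp
  next
    case True
    show ?thesis
    proof (cases "i = j")
      case True
      have "\<forall>k\<in>set [0..<n-1]. F k = [?a,?b] \<or> F k = [?a,?b,?a,?b]" using \<open>i = j\<close> by (simp add: F_def)
      then have "alt (FP @ FS)" unfolding FP_def using alt_blocks[of "[0..<n-1]" F ?a ?b FS] ab altFS \<open>E u v\<close> FSne by blast
      then show ?thesis using W \<open>E u v\<close> True by simp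
    next
      case False
      have "\<not> alt (FP @ FS)"
      proof (cases "i = 0")
        case False
        let ?k = "i - 1"
        have k: "?k < n - 1" using False ij by simp
        have Fk: "F ?k = [?a,?b,?a]" using False \<open>i \<noteq> j\<close> by (simp add: F_def)
        let ?Z = "concat (map F [Suc ?k..<n-1]) @ FS"
        have Z: "?Z \<noteq> [] \<and> hd ?Z = ?a"
        proof (cases "[Suc ?k..<n-1] = []")
          case True then show ?thesis using FSne by (simp only: True) simp
        next
          case False then show ?thesis using hd_concat_blocks[OF Fhd False] by simp
        qed
        then obtain Z' where "?Z = ?a # Z'" by (cases ?Z) auto
        then have "\<not> alt (F ?k @ ?Z)" using Fk by simp
        then show ?thesis unfolding split[OF k] append_assoc using alt_appendD by metis
      next
        case True
        let ?k = "j - 1"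
        have j0: "j \<noteq> 0" using True \<open>i \<noteq> j\<close> by simp
        have k: "?k < n - 1" using j0 ij by simp
        have Fk: "F ?k = [?a,?b,?b]" using True j0 by (simp add: F_def)
        have "\<not> alt (F ?k)" using Fk by simp
        then show ?thesis unfolding split[OF k] append_assoc using alt_appendD by metis
      qed
      then show ?thesis using W False by simp
    qed
  qed
qed



lemma two_elems:
  assumes "distinct xs" "set xs = {u,v}" "u \<noteq> v"
  shows "xs = [u,v] \<or> xs = [v,u]"
proof -
  have "length xs = 2" using distinct_card[OF assms(1)] assms(2,3) by simp
  then obtain x y where xs: "xs = [x,y]"
    by (cases xs; cases "tl xs"; auto)
  then show ?thesis using assms by (auto simp: doubleton_eq_iff)
qed

lemma set_sig: "set (sig n w) = set w \<times> {..<n}"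
  by (auto simp: sig_def blk_def)

lemma set_pre: "0 < n \<Longrightarrow> set (pre n ord) \<subseteq> set ord \<times> {..<n}"
  by (auto simp: pre_def seg_def rnd_def)

lemma length_sig: "length (sig n w) = n * length w"
  by (simp add: sig_def blk_def length_concat o_def sum_list_triv)

lemma length_rnd: "length (rnd n k x) = n"
  by (simp add: rnd_def)

lemma length_seg: "length (seg n ord k) = (n + 1) * length ord"
  by (simp add: seg_def length_concat o_def length_rnd sum_list_triv algebra_simps)

lemma length_pre: "length (pre n ord) = (n - 1) * (n + 1) * length ord"
proof -
  have "length (pre n ord) = sum_list (map (\<lambda>k. (n + 1) * length ord) [0..<n-1])"
    by (simp add: pre_def length_concat o_def length_seg del: mult_Suc)
  also have "\<dots> = (n - 1) * ((n + 1) * length ord)" by (simp only: sum_list_triv length_upt) simp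
  finally show ?thesis by (metis mult.assoc)
qed

theorem mainTheorem6:
  fixes V :: "'a set" and E :: "'a \<Rightarrow> 'a \<Rightarrow> bool" and n :: nat
  assumes "simple_graph V E"
    and "word_representable V E"
    and "n \<ge> 3"
  shows "word_representable (cprod_V V (K_V n)) (cprod_E V E (K_V n) (K_E n))
    \<and> min_rep_length (cprod_V V (K_V n)) (cprod_E V E (K_V n) (K_E n))
        \<le> n * min_rep_length V E + (n ^ 2 - 1) * card V"
proof -
  have n0: "0 < n" using assms(3) by simp
  have symE: "\<And>x y. E x y \<Longrightarrow> E y x" using assms(1) by (simp add: simple_graph_def)
  obtain w0 where "represents V E w0" using assms(2) by (auto simp: word_representable_def)
  then have "\<exists>w. represents V E w \<and> length w = length w0" by blast
  then have "\<exists>w. represents V E w \<and> length w = min_rep_length V E"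
    unfolding min_rep_length_def by (rule LeastI)
  then obtain w where rep: "represents V E w" and len: "length w = min_rep_length V E" by blast
  have setw: "set w = V" using rep by (simp add: represents_def)
  let ?V' = "cprod_V V (K_V n)" and ?E' = "cprod_E V E (K_V n) (K_E n)"
  let ?W = "Wd n w"
  have setW: "set ?W = ?V'"
    using set_sig[of n w] set_pre[OF n0, of "dedup w"] setw
    by (auto simp: Wd_def cprod_V_def K_V_def)
  have pairs: "?E' p q \<longleftrightarrow> alternate ?W p q" if p: "p \<in> ?V'" and q: "q \<in> ?V'" and pq: "p \<noteq> q" for p q
  proof -
    obtain u i where pu: "p = (u,i)" by (cases p)
    obtain v j where qv: "q = (v,j)" by (cases q)
    have uV: "u \<in> V" and i: "i < n" using p pu by (auto simp: cprod_V_def K_V_def)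
    have vV: "v \<in> V" and j: "j < n" using q qv by (auto simp: cprod_V_def K_V_def)
    show ?thesis
    proof (cases "u = v")
      case True
      then have ij: "i \<noteq> j" using pq pu qv by simp
      have "?E' p q" using True ij i j uV pu qv by (simp add: cprod_E_def K_E_def)
      moreover have "alternate ?W p q" using fib_alt[OF n0 _ ij i j, of u w] uV setw pu qv True by simp
      ultimately show ?thesis by simp
    next
      case False
      have E'eq: "?E' p q \<longleftrightarrow> E u v \<and> i = j" using False i pu qv by (auto simp: cprod_E_def K_V_def)
      have "distinct (filter (\<lambda>x. x = u \<or> x = v) (dedup w))" by (simp add: distinct_dedup)
      moreover have "set (filter (\<lambda>x. x = u \<or> x = v) (dedup w)) = {u,v}" using uV vV setw by auto
      ultimately have "filter (\<lambda>x. x = u \<or> x = v) (dedup w) = [u,v] \<or> filter (\<lambda>x. x = u \<or> x = v) (dedup w) = [v,u]"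
        by (rule two_elems[OF _ _ False])
      then show ?thesis
      proof
        assume o: "filter (\<lambda>x. x = u \<or> x = v) (dedup w) = [u,v]"
        show ?thesis using cross[OF rep uV vV False i j o] E'eq pu qv by simp
      next
        assume o: "filter (\<lambda>x. x = u \<or> x = v) (dedup w) = [v,u]"
        have o': "filter (\<lambda>x. x = v \<or> x = u) (dedup w) = [v,u]" using o by (simp add: disj_commute)
        have "alternate ?W (v,j) (u,i) \<longleftrightarrow> E v u \<and> j = i"
          using cross[OF rep vV uV _ j i o'] False by simp
        then show ?thesis using E'eq pu qv alternate_sym symE by metis
      qed
    qed
  qed
  have repW: "represents ?V' ?E' ?W"
    unfolding represents_def using setW pairs by blast
  have lenW: "length ?W = n * min_rep_length V E + (n ^ 2 - 1) * card V"
  proof -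
    have ld: "length (dedup w) = card V" using distinct_card[OF distinct_dedup, of w] setw by simp
    have "(n - 1) * (n + 1) = n ^ 2 - 1" using n0 by (cases n) (auto simp: algebra_simps power2_eq_square)
    then show ?thesis unfolding Wd_def length_append length_sig length_pre ld len by (simp add: algebra_simps)
  qed
  have "min_rep_length ?V' ?E' \<le> length ?W"
    unfolding min_rep_length_def using repW by (auto intro: Least_le)
  then show ?thesis using repW lenW by (auto simp: word_representable_def)
qed

end
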